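(* For every positive integer $n$, $$\int_0^1 \ln \left(1-\sqrt{x}\right) P_{n}(2 x-1) \, dx=\frac{(-1)^n - 4 n - 2}{2 n (n + 1) (2 n + 1)}.$$
   Context: $P_n$ denotes the $n$-th Legendre polynomial, $P_n(x) = \frac{1}{2^n n!}\frac{d^n}{dx^n}(x^2-1)^n$. *)

theory Defs
  imports "HOL-Analysis.Analysis" "HOL-Computational_Algebra.Polynomial"
begin

definition legendre :: "nat \<Rightarrow> real poly" where
  "legendre n = smult (1 / (2 ^ n * fact n)) ((pderiv ^^ n) ([:-1, 0, 1:] ^ n))"

end

theory Submission
  imports Defs "HOL-Real_Asymp.Real_Asymp"
begin


abbreviation "Dp \<equiv> (pderiv :: real poly \<Rightarrow> real poly)"
definition uu :: "real poly" where "uu = [:-1,0,1:]"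
definition px :: "real poly" where "px = [:0,1:]"
lemma pderiv_uu[simp]: "pderiv uu = smult 2 px" by (simp add: uu_def px_def pderiv_pCons)
lemma pderiv_px[simp]: "pderiv px = 1" by (simp add: px_def pderiv_pCons)
lemma poly_uu[simp]: "poly uu y = y^2 - 1" by (simp add: uu_def power2_eq_square)
lemma poly_px[simp]: "poly px y = y" by (simp add: px_def)


lemma Dpow_add: "(Dp ^^ k) (p + q) = (Dp ^^ k) p + (Dp ^^ k) q"
  by (induction k) (auto simp: pderiv_add)

lemma Dpow_smult: "(Dp ^^ k) (smult c p) = smult c ((Dp ^^ k) p)"
  by (induction k) (auto simp: pderiv_smult)

lemma Dpow_Suc': "(Dp ^^ Suc k) p = (Dp ^^ k) (Dp p)"
  by (simp add: funpow_Suc_right del: funpow.simps)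

lemma leib_lin: "(Dp ^^ Suc k) (px * v) = px * (Dp ^^ Suc k) v + smult (of_nat (Suc k)) ((Dp ^^ k) v)"
proof (induction k)
  case 0 then show ?case by (simp add: pderiv_mult)
next
  case (Suc k)
  have "(Dp ^^ Suc (Suc k)) (px * v) = Dp ((Dp ^^ Suc k) (px * v))" by simp
  also have "\<dots> = px * (Dp ^^ Suc (Suc k)) v + smult (of_nat (Suc (Suc k))) ((Dp ^^ Suc k) v)"
    unfolding Suc by (intro poly_ext) (simp add: pderiv_mult pderiv_add pderiv_smult algebra_simps)
  finally show ?case .
qed

lemma leib_quad: "(Dp ^^ Suc (Suc k)) (uu * v) = uu * (Dp ^^ Suc (Suc k)) v
   + smult (of_nat (Suc (Suc k))) (smult 2 px * (Dp ^^ Suc k) v)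
   + smult (of_nat (Suc (Suc k) * Suc k)) ((Dp ^^ k) v)"
proof (induction k)
  case 0 then show ?case by (intro poly_ext) (simp add: pderiv_mult pderiv_add pderiv_smult algebra_simps)
next
  case (Suc k)
  have "(Dp ^^ Suc (Suc (Suc k))) (uu * v) = Dp ((Dp ^^ Suc (Suc k)) (uu * v))" by simp
  also have "\<dots> = uu * (Dp ^^ Suc (Suc (Suc k))) v
   + smult (of_nat (Suc (Suc (Suc k)))) (smult 2 px * (Dp ^^ Suc (Suc k)) v)
   + smult (of_nat (Suc (Suc (Suc k)) * Suc (Suc k))) ((Dp ^^ Suc k) v)"
    unfolding Suc by (intro poly_ext) (simp add: pderiv_mult pderiv_add pderiv_smult algebra_simps)
  finally show ?case .
qed

lemma leg_def': "legendre n = smult (1 / (2 ^ n * fact n)) ((Dp ^^ n) (uu ^ n))"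
  by (simp add: legendre_def uu_def)

lemma leg0: "legendre 0 = 1" by (simp add: leg_def')
lemma leg1: "legendre 1 = px" by (simp add: leg_def')

lemma D2pow: "Dp (Dp (uu ^ Suc (Suc k))) = smult (of_nat (2*(k+2)*(2*k+3))) (uu ^ Suc k) + smult (of_nat (4*(k+1)*(k+2))) (uu ^ k)"
  apply (simp only: pderiv_power_Suc pderiv_mult pderiv_smult pderiv_uu pderiv_px)
  apply (intro poly_ext)
  apply (simp add: algebra_simps power2_eq_square)
  done

lemma Dpow_comm: "(Dp ^^ k) (Dp p) = Dp ((Dp ^^ k) p)"
  by (metis Dpow_Suc' funpow.simps(2) o_apply)

lemma leg_rec: "pderiv (legendre (Suc (Suc k))) = smult (2*real k+3) (legendre (Suc k)) + pderiv (legendre k)"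
proof -
  have "pderiv (legendre (Suc (Suc k))) = smult (1 / (2 ^ (k+2) * fact (k+2))) ((Dp ^^ Suc k) (Dp (Dp (uu ^ Suc (Suc k)))))"
    by (simp add: leg_def' pderiv_smult Dpow_comm)
  also have "\<dots> = smult (1 / (2 ^ (k+2) * fact (k+2)) * of_nat (2*(k+2)*(2*k+3))) ((Dp ^^ Suc k) (uu ^ Suc k))
        + smult (1 / (2 ^ (k+2) * fact (k+2)) * of_nat (4*(k+1)*(k+2))) (Dp ((Dp ^^ k) (uu ^ k)))"
    unfolding D2pow Dpow_add Dpow_smult smult_add_right smult_smult Dpow_Suc' Dpow_comm ..
  also have "\<dots> = smult (2*real k+3) (legendre (Suc k)) + pderiv (legendre k)"
  proof -
    have e1: "1 / (2 ^ (k+2) * fact (k+2)) * of_nat (2*(k+2)*(2*k+3)) = (2*real k+3) * (1 / (2 ^ (k+1) * fact (k+1)))"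
      by (simp add: fact_Suc divide_simps) (simp add: algebra_simps)
    have e2: "1 / (2 ^ (k+2) * fact (k+2)) * of_nat (4*(k+1)*(k+2)) = (1 / (2 ^ k * fact k) :: real)"
      by (simp add: fact_Suc divide_simps) (simp add: algebra_simps)
    show ?thesis unfolding e1 e2 by (simp add: leg_def' pderiv_smult)
  qed
  finally show ?thesis .
qed

lemma uuD: "uu * Dp (uu ^ n) = smult (2 * real n) (px * uu ^ n)"
proof (cases n)
  case 0 then show ?thesis by simp
next
  case (Suc m)
  show ?thesis unfolding Suc
    apply (simp only: pderiv_power_Suc pderiv_uu)
    apply (intro poly_ext)
    apply (simp add: algebra_simps)
    done
qed

lemma W_ode: "Dp (uu * Dp ((Dp ^^ n) (uu ^ n))) = smult (real n * (real n + 1)) ((Dp ^^ n) (uu ^ n))"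
proof (cases n)
  case 0 then show ?thesis by simp
next
  case (Suc m)
  define W where "W = (Dp ^^ n) (uu ^ n)"
  have "(Dp ^^ Suc (Suc m)) (uu * Dp (uu ^ n)) = (Dp ^^ Suc (Suc m)) (smult (2 * real n) (px * uu ^ n))"
    by (simp only: uuD)
  also have "\<dots> = smult (2 * real n) (px * Dp W + smult (real n + 1) W)"
    unfolding Dpow_smult leib_lin W_def Suc by (simp add: Dpow_comm)
  finally have E: "uu * Dp (Dp W) + smult (real n + 1) (smult 2 px * Dp W) + smult ((real n + 1) * real n) W
      = smult (2 * real n) (px * Dp W + smult (real n + 1) W)"
    unfolding leib_quad W_def Suc by (simp add: Dpow_comm algebra_simps)
  show ?thesis unfolding W_def[symmetric]
  proof (intro poly_ext)
    fix y
    from arg_cong[OF E, of "\<lambda>p. poly p y"]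
    have "(y^2-1) * poly (Dp (Dp W)) y + (real n + 1) * (2 * y * poly (Dp W) y) + (real n + 1) * real n * poly W y
       = 2 * real n * (y * poly (Dp W) y + (real n + 1) * poly W y)" by (simp add: algebra_simps)
    then show "poly (Dp (uu * Dp W)) y = poly (smult (real n * (real n + 1)) W) y"
      by (simp add: pderiv_mult algebra_simps)
  qed
qed

lemma leg_ode: "pderiv (uu * pderiv (legendre n)) = smult (real n * (real n + 1)) (legendre n)"
  using W_ode[of n] by (simp add: leg_def' pderiv_smult mult_smult_right smult_smult mult.commute)

lemma leg_d1: "poly (pderiv (legendre k)) 1 = real k * (real k + 1) / 2 * poly (legendre k) 1"
proof -
  have "poly (pderiv (uu * pderiv (legendre k))) 1 = poly (smult (real k * (real k + 1)) (legendre k)) 1"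
    by (simp only: leg_ode)
  then show ?thesis by (simp add: pderiv_mult)
qed

lemma leg_at1_aux: "poly (legendre n) 1 = 1 \<and> poly (legendre (Suc n)) 1 = 1"
proof (induction n)
  case 0 then show ?case by (simp add: leg0 leg1[unfolded One_nat_def])
next
  case (Suc k)
  have "poly (pderiv (legendre (Suc (Suc k)))) 1 = (2*real k+3) * poly (legendre (Suc k)) 1 + poly (pderiv (legendre k)) 1"
    by (simp add: leg_rec)
  then have "real (Suc (Suc k)) * (real (Suc (Suc k)) + 1) / 2 * poly (legendre (Suc (Suc k))) 1
      = (2*real k+3) + real k * (real k + 1) / 2"
    using Suc.IH by (simp only: leg_d1) simp
  then have "((real k+2)*(real k+3)) * poly (legendre (Suc (Suc k))) 1 = ((real k+2)*(real k+3)) * 1"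
    by (simp add: field_simps algebra_simps)
  moreover have "((real k+2)*(real k+3)) \<noteq> 0" by simp
  ultimately have "poly (legendre (Suc (Suc k))) 1 = 1"
    by (metis mult_left_cancel)
  then show ?case using Suc.IH by simp
qed

lemma leg_at1: "poly (legendre n) 1 = 1"
  using leg_at1_aux by blast



lemma phi_lim: "((\<lambda>s::real. s * ln s) \<longlongrightarrow> 0) (at_right 0)"
  by real_asymp

lemma phi_cont: "continuous_on {0..1} (\<lambda>s::real. s * ln s)"
  unfolding continuous_on_eq_continuous_within
proof
  fix s :: real assume s: "s \<in> {0..1}"
  show "continuous (at s within {0..1}) (\<lambda>s. s * ln s)"
  proof (cases "s = 0")
    case True
    then show ?thesis
      unfolding continuous_within using phi_lim by (simp add: at_within_Icc_at_right)
  next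
    case False
    then have "s > 0" using s by auto
    then have "isCont (\<lambda>s. s * ln s) s" by (intro continuous_intros) auto
    then show ?thesis by (simp add: continuous_at_imp_continuous_within)
  qed
qed

definition Wk :: "nat \<Rightarrow> real poly \<Rightarrow> real" where
  "Wk k R = integral {0..1} (\<lambda>t. t^k * poly R (2*t^2-1))"

lemma Wk_hasint: "((\<lambda>t. t^k * poly R (2*t^2-1)) has_integral Wk k R) {0..1}"
  unfolding Wk_def by (intro integrable_integral integrable_continuous_interval continuous_intros)

lemma Wk_add: "Wk k (R + S) = Wk k R + Wk k S"
  using has_integral_add[OF Wk_hasint[of k R] Wk_hasint[of k S]]
  by (intro has_integral_unique[OF Wk_hasint[of k "R+S"]]) (simp add: algebra_simps)

lemma Wk_smult: "Wk k (smult c R) = c * Wk k R"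
  using has_integral_mult_right[OF Wk_hasint[of k R], of c]
  by (intro has_integral_unique[OF Wk_hasint[of k "smult c R"]]) (simp add: algebra_simps)

lemma Wk_zero: "Wk k 0 = 0"
  using Wk_smult[of k 0 0] by simp

lemma Wk_one: "Wk 0 1 = 1"
  unfolding Wk_def by simp

lemma dpoly: "((\<lambda>t. poly R (2*t^2-1)) has_real_derivative poly (pderiv R) (2*t^2-1) * (4*t)) (at t)"
proof -
  have "((\<lambda>t::real. 2*t^2-1) has_real_derivative 4*t) (at t)"
    by (auto intro!: derivative_eq_intros)
  from DERIV_chain'[OF this poly_DERIV[of R "2*t^2-1"]] show ?thesis by (simp add: mult.commute)
qed

lemma ftc01: assumes "\<And>t. (f has_real_derivative f' t) (at t)"
  shows "(f' has_integral (f 1 - f 0)) {0..(1::real)}"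
  by (rule fundamental_theorem_of_calculus)
     (auto simp: has_real_derivative_iff_has_vector_derivative[symmetric] intro!: has_field_derivative_at_within assms)

lemma fact_i: "Wk 0 R + 4 * Wk 2 (pderiv R) = poly R 1"
proof -
  have d: "((\<lambda>t. t * poly R (2*t^2-1)) has_real_derivative
      t^0 * poly R (2*t^2-1) + 4 * (t^2 * poly (pderiv R) (2*t^2-1))) (at t)" for t
    using DERIV_mult[OF DERIV_ident dpoly[of R t]] by (simp add: algebra_simps power2_eq_square)
  have "((\<lambda>t. t^0 * poly R (2*t^2-1) + 4 * (t^2 * poly (pderiv R) (2*t^2-1))) has_integral
     Wk 0 R + 4 * Wk 2 (pderiv R)) {0..1}"
    by (intro has_integral_add has_integral_mult_right Wk_hasint)
  from has_integral_unique[OF this ftc01[OF d]] show ?thesis by simp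
qed

lemma fact_ii: "2 * Wk 1 R + 4 * Wk 3 (pderiv R) = poly R 1"
proof -
  have d: "((\<lambda>t. t^2 * poly R (2*t^2-1)) has_real_derivative
      2 * (t^1 * poly R (2*t^2-1)) + 4 * (t^3 * poly (pderiv R) (2*t^2-1))) (at t)" for t
    using DERIV_mult[OF DERIV_pow[of 2 t] dpoly[of R t]] by (simp add: algebra_simps power2_eq_square power3_eq_cube)
  have "((\<lambda>t. 2 * (t^1 * poly R (2*t^2-1)) + 4 * (t^3 * poly (pderiv R) (2*t^2-1))) has_integral
     2 * Wk 1 R + 4 * Wk 3 (pderiv R)) {0..1}"
    by (intro has_integral_add has_integral_mult_right Wk_hasint)
  from has_integral_unique[OF this ftc01[OF d]] show ?thesis by simp
qed

lemma fact_iii: "4 * Wk 1 (pderiv g) = poly g 1 - poly g (-1)"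
proof -
  have d: "((\<lambda>t. poly g (2*t^2-1)) has_real_derivative 4 * (t^1 * poly (pderiv g) (2*t^2-1))) (at t)" for t
    using dpoly[of g t] by (simp add: algebra_simps)
  have "((\<lambda>t. 4 * (t^1 * poly (pderiv g) (2*t^2-1))) has_integral 4 * Wk 1 (pderiv g)) {0..1}"
    by (intro has_integral_add has_integral_mult_right Wk_hasint)
  from has_integral_unique[OF this ftc01[OF d]] show ?thesis by simp
qed

lemma fact_iv: "Wk 0 (pderiv (uu * R)) = Wk 2 R - Wk 0 R"
proof -
  have d: "((\<lambda>t. (t * (t^2 - 1)) * poly R (2*t^2-1)) has_real_derivative
      t^0 * poly (pderiv (uu * R)) (2*t^2-1) - (t^2 * poly R (2*t^2-1)) + t^0 * poly R (2*t^2-1)) (at t)" for t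
  proof -
    have "((\<lambda>t::real. t * (t^2 - 1)) has_real_derivative 3*t^2 - 1) (at t)"
      by (auto intro!: derivative_eq_intros simp: algebra_simps power2_eq_square)
    from DERIV_mult[OF this dpoly[of R t]] show ?thesis
      by (simp add: pderiv_mult algebra_simps power2_eq_square power3_eq_cube)
  qed
  have "((\<lambda>t. t^0 * poly (pderiv (uu * R)) (2*t^2-1) - (t^2 * poly R (2*t^2-1)) + t^0 * poly R (2*t^2-1)) has_integral
     Wk 0 (pderiv (uu * R)) - Wk 2 R + Wk 0 R) {0..1}"
    by (intro has_integral_add has_integral_diff Wk_hasint)
  from has_integral_unique[OF this ftc01[OF d]] show ?thesis by simp
qed



lemma L_form: "Wk 0 (pderiv (legendre n)) = (1 - Wk 0 (legendre n))/4 - real n * (real n + 1) * Wk 0 (legendre n)"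
proof -
  have 1: "Wk 0 (legendre n) + 4 * Wk 2 (pderiv (legendre n)) = 1"
    using fact_i[of "legendre n"] leg_at1 by simp
  have 2: "real n * (real n + 1) * Wk 0 (legendre n) = Wk 2 (pderiv (legendre n)) - Wk 0 (pderiv (legendre n))"
    using fact_iv[of "pderiv (legendre n)"] by (simp add: leg_ode Wk_smult)
  from 1 2 show ?thesis by (simp add: algebra_simps)
qed

lemma L_rec: "Wk 0 (pderiv (legendre (Suc (Suc k)))) = (2*real k+3) * Wk 0 (legendre (Suc k)) + Wk 0 (pderiv (legendre k))"
  by (simp add: leg_rec Wk_add Wk_smult)

lemma K_val_aux: "Wk 0 (legendre n) = (-1)^n / (2*real n+1) \<and> Wk 0 (legendre (Suc n)) = (-1)^(Suc n) / (2*real (Suc n)+1)"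
proof (induction n)
  case 0
  have a: "Wk 0 (legendre 0) = 1" using L_form[of 0] by (simp add: leg0 Wk_zero)
  have "1 = (1 - Wk 0 (legendre 1))/4 - 2 * Wk 0 (legendre 1)"
    using L_form[of 1] leg1 by (simp add: Wk_one)
  then have b: "Wk 0 (legendre 1) = -1/3" by (simp add: field_simps)
  show ?case using a b by simp
next
  case (Suc k)
  have "Wk 0 (pderiv (legendre (Suc (Suc k)))) = (2*real k+3) * Wk 0 (legendre (Suc k)) + Wk 0 (pderiv (legendre k))"
    by (rule L_rec)
  then have "(1 - Wk 0 (legendre (Suc (Suc k))))/4 - real (Suc (Suc k)) * (real (Suc (Suc k)) + 1) * Wk 0 (legendre (Suc (Suc k)))
     = (2*real k+3) * ((-1)^(Suc k) / (2*real (Suc k)+1)) + ((1 - (-1)^k / (2*real k+1))/4 - real k * (real k + 1) * ((-1)^k / (2*real k+1)))"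
    using Suc.IH by (simp only: L_form)
  moreover define sg where "sg = ((-1::real)^k)"
  moreover define K where "K = Wk 0 (legendre (Suc (Suc k)))"
  ultimately have H: "(1 - K)/4 - real (Suc (Suc k)) * (real (Suc (Suc k)) + 1) * K
     = (2*real k+3) * (- sg / (2*real (Suc k)+1)) + ((1 - sg / (2*real k+1))/4 - real k * (real k + 1) * (sg / (2*real k+1)))"
    by simp
  have r1: "(2*real k+3) * (- sg / (2*real (Suc k)+1)) = - sg" by (simp add: field_simps)
  have r2: "sg / (2*real k+1)/4 + real k * (real k + 1) * (sg / (2*real k+1)) = sg * (2*real k+1)/4"
  proof -
    have gen: "sg / a/4 + c * (c + 1) * (sg / a) = sg * a/4" if "a > 0" "a = 2*c+1" for a c :: real
    proof -
      have "sg / a/4 + c * (c + 1) * (sg / a) = sg * (1 + 4*c*(c+1)) / (4*a)" using that(1) by (simp add: field_simps)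
      also have "1 + 4*c*(c+1) = a * a" using that(2) by (simp add: algebra_simps)
      finally show ?thesis using that(1) by simp
    qed
    show ?thesis by (rule gen) auto
  qed
  have "K * ((2*real k+5)*(2*real k+5)) = sg * (2*real k+5)"
  proof -
    have H3: "(1 - K)/4 - real (Suc (Suc k)) * (real (Suc (Suc k)) + 1) * K = 1/4 - sg - sg * (2*real k+1)/4"
      using H r1 r2 unfolding diff_divide_distrib by linarith
    then show ?thesis by (simp add: algebra_simps) (simp add: field_simps)
  qed
  moreover have "K = sg / a" if "a > 0" "K * (a * a) = sg * a" for a :: real
  proof -
    have "(K * a) * a = sg * a" using that(2) by (simp add: mult.assoc)
    then have "K * a = sg" using that(1) by simp
    then show ?thesis using that(1) by (simp add: field_simps)
  qed
  ultimately have "K = sg / (2*real k+5)" by simp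
  then have "Wk 0 (legendre (Suc (Suc k))) = (-1)^(Suc (Suc k)) / (2*real (Suc (Suc k))+1)"
    by (simp add: K_def sg_def algebra_simps)
  then show ?case using Suc.IH by simp
qed

lemma K_val: "Wk 0 (legendre n) = (-1)^n / (2*real n+1)"
  using K_val_aux by blast

lemma T_zero: assumes "n \<ge> 1" shows "Wk 1 (legendre n) = 0"
proof -
  have "4 * Wk 1 (pderiv (uu * pderiv (legendre n))) = poly (uu * pderiv (legendre n)) 1 - poly (uu * pderiv (legendre n)) (-1)"
    by (rule fact_iii)
  then have "4 * (real n * (real n + 1)) * Wk 1 (legendre n) = 0" by (simp add: leg_ode Wk_smult)
  then show ?thesis using assms by simp
qed

lemma M_val: assumes "n \<ge> 1" shows "Wk 3 (pderiv (legendre n)) = 1/4"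
  using fact_ii[of "legendre n"] T_zero[OF assms] leg_at1[of n] by simp

lemma J_val: "Wk 2 (pderiv (legendre n)) = (1 - (-1)^n / (2*real n+1))/4"
  using fact_i[of "legendre n"] K_val[of n] leg_at1[of n] by simp



theorem mainTheorem8:
  fixes n :: nat
  assumes "n \<ge> 1"
  shows "((\<lambda>x::real. ln (1 - sqrt x) * poly (legendre n) (2 * x - 1)) has_integral
           (((-1) ^ n - 4 * real n - 2) / (2 * real n * (real n + 1) * (2 * real n + 1)))) {0..1}"
proof -
  define N where "N = real n * (real n + 1)"
  have Npos: "N > 0" using assms by (simp add: N_def)
  define P where "P = legendre n"
  define G where "G = (\<lambda>t::real. -2/N * (t^2 * poly (pderiv P) (2*t^2-1) + t^3 * poly (pderiv P) (2*t^2-1)))"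
  have Gint: "(G has_integral (-2/N * (Wk 2 (pderiv P) + Wk 3 (pderiv P)))) {0..1}"
    unfolding G_def by (intro has_integral_mult_right has_integral_add Wk_hasint)
  have Gcont: "continuous_on S G" for S unfolding G_def by (intro continuous_intros)
  define h where "h = (\<lambda>t. integral {0..t} G)"
  have h0: "h 0 = 0" by (simp add: h_def)
  have h1: "h 1 = -2/N * (Wk 2 (pderiv P) + Wk 3 (pderiv P))"
    unfolding h_def using Gint by (rule integral_unique)
  have hdw: "(h has_real_derivative G s) (at s within {0..1})" if "s \<in> {0..1}" for s
    unfolding h_def by (rule integral_has_real_derivative[OF Gcont that])
  have hd: "(h has_real_derivative G s) (at s)" if "s \<in> {0<..<1}" for s
    using hdw[of s] that at_within_interior[of s "{0..1::real}"] by auto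
  have hcont: "continuous_on {0..1} h"
    unfolding continuous_on_eq_continuous_within using hdw DERIV_continuous by blast
  define g where "g = uu * pderiv P"
  have polyg: "poly g y = (y^2 - 1) * poly (pderiv P) y" for y by (simp add: g_def)
  have polydg: "poly (pderiv g) y = N * poly P y" for y
    by (simp add: g_def P_def leg_ode N_def)
  define q where "q = (\<lambda>x. poly g (2*x-1) / (2*N))"
  define F where "F = (\<lambda>x. ln (1 - sqrt x) * q x + h (sqrt x))"
  have Feq: "F x = ((1 - sqrt x) * ln (1 - sqrt x)) * (-(1 + sqrt x) * 4 * x * poly (pderiv P) (2*x-1) / (2*N)) + h (sqrt x)"
    if "x \<in> {0..1}" for x
  proof -
    have x: "x = sqrt x ^ 2" using that by simp
    have e: "poly g (2*x-1) = -(1 - sqrt x) * ((1 + sqrt x) * 4 * x * poly (pderiv P) (2*x-1))"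
      unfolding polyg by (subst (1 2 3) x) (simp add: algebra_simps power2_eq_square)
    show ?thesis unfolding F_def q_def e by (simp add: algebra_simps)
  qed
  have phic: "continuous_on {0..1} (\<lambda>x. (1 - sqrt x) * ln (1 - sqrt x))"
    by (rule continuous_on_compose2[OF phi_cont, where f="\<lambda>x. 1 - sqrt x"])
       (auto intro!: continuous_intros)
  have hsc: "continuous_on {0..1} (\<lambda>x. h (sqrt x))"
    by (rule continuous_on_compose2[OF hcont, where f=sqrt]) (auto intro!: continuous_intros)
  have Fcont: "continuous_on {0..1} F"
  proof (rule continuous_on_cong[THEN iffD1, OF refl Feq[symmetric]])
    show "continuous_on {0..1} (\<lambda>x. ((1 - sqrt x) * ln (1 - sqrt x)) * (-(1 + sqrt x) * 4 * x * poly (pderiv P) (2*x-1) / (2*N)) + h (sqrt x))"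
      by (intro continuous_on_add continuous_on_mult[OF phic] hsc) (use Npos in \<open>auto intro!: continuous_intros\<close>)
  qed auto
  have Fd: "(F has_real_derivative ln (1 - sqrt x) * poly P (2*x-1)) (at x)" if x: "x \<in> {0<..<1}" for x
  proof -
    define s where "s = sqrt x"
    have s: "0 < s" "s < 1" using x by (auto simp: s_def)
    have xs: "x = s^2" using x by (simp add: s_def)
    have dsq: "(sqrt has_real_derivative inverse s / 2) (at x)" unfolding s_def using x by (intro DERIV_real_sqrt) auto
    have d1: "((\<lambda>x. 1 - sqrt x) has_real_derivative -(inverse s / 2)) (at x)"
      using DERIV_diff[OF DERIV_const dsq] by simp
    have d2: "((\<lambda>x. ln (1 - sqrt x)) has_real_derivative 1/(1-s) * -(inverse s / 2)) (at x)"
      using DERIV_chain'[OF d1 DERIV_ln_divide[of "1 - sqrt x"]] s by (simp add: s_def)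
    have d3: "((\<lambda>x. 2*x-1) has_real_derivative 2) (at x)"
      by (auto intro!: derivative_eq_intros)
    have d4: "(q has_real_derivative poly (pderiv g) (2*x-1) * 2 / (2*N)) (at x)"
      unfolding q_def by (intro DERIV_cdivide DERIV_chain'[OF d3 poly_DERIV])
    have d5: "((\<lambda>x. h (sqrt x)) has_real_derivative G s * (inverse s / 2)) (at x)"
    proof -
      have hs: "(h has_real_derivative G s) (at (sqrt x))" using hd[of s] s by (simp add: s_def)
      show ?thesis using DERIV_chain'[OF dsq hs] by (simp add: mult.commute)
    qed
    have dF: "(F has_real_derivative (1/(1-s) * -(inverse s / 2)) * q x + poly (pderiv g) (2*x-1) * 2 / (2*N) * ln (1 - sqrt x)
        + G s * (inverse s / 2)) (at x)"
      unfolding F_def by (intro DERIV_add DERIV_mult d2 d4 d5)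
    have eq: "(1/(1-s) * -(inverse s / 2)) * q x + poly (pderiv g) (2*x-1) * 2 / (2*N) * ln (1 - sqrt x)
        + G s * (inverse s / 2) = ln (1 - sqrt x) * poly P (2*x-1)"
    proof -
      have "(1/(1-s) * -(inverse s / 2)) * q x + G s * (inverse s / 2) = 0"
        unfolding q_def polyg G_def xs using s Npos
        by (simp add: field_simps) (simp add: algebra_simps power2_eq_square power3_eq_cube)
      moreover have "poly (pderiv g) (2*x-1) * 2 / (2*N) * ln (1 - sqrt x) = ln (1 - sqrt x) * poly P (2*x-1)"
        unfolding polydg using Npos by simp
      ultimately show ?thesis by linarith
    qed
    show ?thesis using dF unfolding eq .
  qed
  have FTC: "((\<lambda>x. ln (1 - sqrt x) * poly P (2*x-1)) has_integral (F 1 - F 0)) {0..1}"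
    by (rule fundamental_theorem_of_calculus_interior[OF _ Fcont])
       (auto simp: has_real_derivative_iff_has_vector_derivative[symmetric] intro!: Fd)
  have F1: "F 1 - F 0 = h 1" by (simp add: F_def h0)
  have val: "h 1 = (((-1) ^ n - 4 * real n - 2) / (2 * real n * (real n + 1) * (2 * real n + 1)))"
  proof -
    define sg where "sg = ((-1::real)^n)"
    have "h 1 = -2/N * ((1 - sg / (2*real n+1))/4 + 1/4)"
      unfolding h1 P_def sg_def J_val[of n] M_val[OF assms] ..
    also have "\<dots> = (sg - 4 * real n - 2) / (2 * real n * (real n + 1) * (2 * real n + 1))"
    proof -
      have gen: "-2/(m*(m+1)) * ((1 - sg / (2*m+1))/4 + 1/4) = (sg - 4 * m - 2) / (2 * m * (m + 1) * (2 * m + 1))"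
        if "m > 0" for m :: real
      proof -
        have a: "(1 - sg / (2*m+1))/4 + 1/4 = (2*(2*m+1) - sg)/(4*(2*m+1))" using that by (simp add: field_simps)
        show ?thesis unfolding a using that by (simp add: divide_simps) (simp add: algebra_simps)
      qed
      show ?thesis unfolding N_def using assms by (intro gen) simp
    qed
    finally show ?thesis by (simp add: sg_def)
  qed
  show ?thesis using FTC unfolding F1 val P_def .
qed


end
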